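(* Let $\delta\in(0,1)$, let $S\subseteq V$ be fixed, and let $\mathcal{R}$ be a collection of $T$ independent IBSs drawn from $\Omega^n$. Let $c=\ln(1/\delta)$ and $p=p(S)$. Define $$f_l(\mathcal{R},\delta)=\min\left\{\hat{\mathbb{B}}(S)-\frac{\rho c\Gamma}{3T},\ \hat{\mathbb{B}}(S)-\frac{\Gamma}{T}\left(\frac{\rho c}{3}-cp+\sqrt{\Big(\frac{\rho c}{3}-cp\Big)^2+2Tpc\frac{\hat{\mathbb{B}}(S)}{\Gamma}}\right)\right\}.$$ Then $\Pr[\mathbb{B}(S)\ge f_l(\mathcal{R},\delta)]\ge1-\delta$.
   Context: Setting: $G=(V,E)$ is a directed graph under the Independent Cascade model with edge probabilities $p(u,v)\in(0,1)$. A random live-edge graph $g$ keeps each edge $e$ independently with probability $p(e)$, and $R(g,S)$ is the set of nodes reachable from $S$ in $g$. Each node has benefit $b(u)\ge0$. The benefit function is $\mathbb{B}(S)=\mathbb{E}_g[\sum_{u\in R(g,S)}b(u)]$. Let $\Gamma=\sum_u b(u)>0$. For each node $u$, $\gamma(u)=1-\prod_{v\in N_{in}(u)}(1-p(v,u))$, and $\Phi=\sum_u\gamma(u)b(u)>0$. IBS distribution $\Omega^n$: pick a source $u$ with probability $\gamma(u)b(u)/\Phi$. Then output the set of nodes that can reach $u$ in a random live-edge graph, conditioned on at least one in-edge of $u$ being kept. For a collection $\mathcal{R}=\{R_1,\dots,R_T\}$ of IBSs, the estimator is $$\hat{\mathbb{B}}(S)=\frac{\Phi}{T}\sum_{j=1}^T\min\{1,|S\cap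 R_j|\}+\sum_{v\in S}(1-\gamma(v))b(v).$$ Further definitions: - $\mu_{\min}(S)=\sum_{v\in S}(1-\gamma(v))b(v)/\Gamma$; - $\rho=\Phi/\Gamma$; - $\mu_{\max}(S)=\rho+\mu_{\min}(S)$; - $p(S)=\min\{\rho,\ \mu_{\max}(S)+\mu_{\min}(S)-2\sqrt{\mu_{\min}(S)\mu_{\max}(S)}\}$. *)

theory Defs
  imports "HOL-Probability.Probability"
begin

text \<open>Independent Cascade model on a directed graph with vertex set V and edge set E,
  edge probabilities pe. A live-edge graph is a random function E -> bool
  (edge kept or not), edges kept independently with probability pe e.\<close>

definition live_pmf :: "('a \<times> 'a) set \<Rightarrow> ('a \<times> 'a \<Rightarrow> real) \<Rightarrow> ('a \<times> 'a \<Rightarrow> bool) pmf" where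
  "live_pmf E pe = Pi_pmf E False (\<lambda>e. bernoulli_pmf (pe e))"

definition live_edges :: "('a \<times> 'a) set \<Rightarrow> ('a \<times> 'a \<Rightarrow> bool) \<Rightarrow> ('a \<times> 'a) set" where
  "live_edges E g = {e \<in> E. g e}"

definition reach :: "('a \<times> 'a) set \<Rightarrow> ('a \<times> 'a \<Rightarrow> bool) \<Rightarrow> 'a set \<Rightarrow> 'a set" where
  "reach E g S = {v. \<exists>s\<in>S. (s, v) \<in> (live_edges E g)\<^sup>*}"

definition benefit :: "('a \<times> 'a) set \<Rightarrow> ('a \<times> 'a \<Rightarrow> real) \<Rightarrow> ('a \<Rightarrow> real) \<Rightarrow> 'a set \<Rightarrow> real" where
  "benefit E pe b S = measure_pmf.expectation (live_pmf E pe) (\<lambda>g. \<Sum>u\<in>reach E g S. b u)"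

definition in_nbrs :: "('a \<times> 'a) set \<Rightarrow> 'a \<Rightarrow> 'a set" where
  "in_nbrs E u = {v. (v, u) \<in> E}"

definition gam :: "('a \<times> 'a) set \<Rightarrow> ('a \<times> 'a \<Rightarrow> real) \<Rightarrow> 'a \<Rightarrow> real" where
  "gam E pe u = 1 - (\<Prod>v\<in>in_nbrs E u. 1 - pe (v, u))"

definition Gamma_tot :: "'a set \<Rightarrow> ('a \<Rightarrow> real) \<Rightarrow> real" where
  "Gamma_tot V b = (\<Sum>u\<in>V. b u)"

definition Phi :: "'a set \<Rightarrow> ('a \<times> 'a) set \<Rightarrow> ('a \<times> 'a \<Rightarrow> real) \<Rightarrow> ('a \<Rightarrow> real) \<Rightarrow> real" where
  "Phi V E pe b = (\<Sum>u\<in>V. gam E pe u * b u)"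

definition source_pmf :: "'a set \<Rightarrow> ('a \<times> 'a) set \<Rightarrow> ('a \<times> 'a \<Rightarrow> real) \<Rightarrow> ('a \<Rightarrow> real) \<Rightarrow> 'a pmf" where
  "source_pmf V E pe b = embed_pmf (\<lambda>u. if u \<in> V then gam E pe u * b u / Phi V E pe b else 0)"

definition IBS_pmf :: "'a set \<Rightarrow> ('a \<times> 'a) set \<Rightarrow> ('a \<times> 'a \<Rightarrow> real) \<Rightarrow> ('a \<Rightarrow> real) \<Rightarrow> 'a set pmf" where
  "IBS_pmf V E pe b =
     bind_pmf (source_pmf V E pe b) (\<lambda>u.
       map_pmf (\<lambda>g. {v. (v, u) \<in> (live_edges E g)\<^sup>*})
         (cond_pmf (live_pmf E pe) {g. \<exists>v. (v, u) \<in> E \<and> g (v, u)}))"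

definition IBS_sample_pmf :: "'a set \<Rightarrow> ('a \<times> 'a) set \<Rightarrow> ('a \<times> 'a \<Rightarrow> real) \<Rightarrow> ('a \<Rightarrow> real) \<Rightarrow> nat \<Rightarrow> (nat \<Rightarrow> 'a set) pmf" where
  "IBS_sample_pmf V E pe b T = Pi_pmf {..<T} {} (\<lambda>_. IBS_pmf V E pe b)"

definition est :: "'a set \<Rightarrow> ('a \<times> 'a) set \<Rightarrow> ('a \<times> 'a \<Rightarrow> real) \<Rightarrow> ('a \<Rightarrow> real) \<Rightarrow> nat \<Rightarrow> (nat \<Rightarrow> 'a set) \<Rightarrow> 'a set \<Rightarrow> real" where
  "est V E pe b T Rs S = Phi V E pe b / real T * (\<Sum>j<T. min 1 (real (card (S \<inter> Rs j))))
      + (\<Sum>v\<in>S. (1 - gam E pe v) * b v)"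

definition mu_min :: "'a set \<Rightarrow> ('a \<times> 'a) set \<Rightarrow> ('a \<times> 'a \<Rightarrow> real) \<Rightarrow> ('a \<Rightarrow> real) \<Rightarrow> 'a set \<Rightarrow> real" where
  "mu_min V E pe b S = (\<Sum>v\<in>S. (1 - gam E pe v) * b v) / Gamma_tot V b"

definition rho :: "'a set \<Rightarrow> ('a \<times> 'a) set \<Rightarrow> ('a \<times> 'a \<Rightarrow> real) \<Rightarrow> ('a \<Rightarrow> real) \<Rightarrow> real" where
  "rho V E pe b = Phi V E pe b / Gamma_tot V b"

definition mu_max :: "'a set \<Rightarrow> ('a \<times> 'a) set \<Rightarrow> ('a \<times> 'a \<Rightarrow> real) \<Rightarrow> ('a \<Rightarrow> real) \<Rightarrow> 'a set \<Rightarrow> real" where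
  "mu_max V E pe b S = rho V E pe b + mu_min V E pe b S"

definition pS :: "'a set \<Rightarrow> ('a \<times> 'a) set \<Rightarrow> ('a \<times> 'a \<Rightarrow> real) \<Rightarrow> ('a \<Rightarrow> real) \<Rightarrow> 'a set \<Rightarrow> real" where
  "pS V E pe b S = min (rho V E pe b)
     (mu_max V E pe b S + mu_min V E pe b S
        - 2 * sqrt (mu_min V E pe b S * mu_max V E pe b S))"

definition f_l :: "'a set \<Rightarrow> ('a \<times> 'a) set \<Rightarrow> ('a \<times> 'a \<Rightarrow> real) \<Rightarrow> ('a \<Rightarrow> real) \<Rightarrow> nat \<Rightarrow> 'a set \<Rightarrow> real \<Rightarrow> (nat \<Rightarrow> 'a set) \<Rightarrow> real" where
  "f_l V E pe b T S \<delta> Rs =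
     (let c = ln (1 / \<delta>); p = pS V E pe b S; \<rho> = rho V E pe b; \<Gamma> = Gamma_tot V b;
          Bh = est V E pe b T Rs S
      in min (Bh - \<rho> * c * \<Gamma> / (3 * real T))
             (Bh - \<Gamma> / real T * (\<rho> * c / 3 - c * p
                 + sqrt ((\<rho> * c / 3 - c * p)\<^sup>2 + 2 * real T * p * c * Bh / \<Gamma>))))"

end

theory Submission
  imports Defs
begin

lemma fact_ge_aux: "2 * 3 ^ n \<le> (fact (n + 2) :: real)"
proof (induction n)
  case 0 then show ?case by simp
next
  case (Suc n)
  have e: "fact (Suc n + 2) = (real n + 3) * (fact (n + 2) :: real)"
    by (simp add: algebra_simps)
  have "3 * (fact (n+2) :: real) \<le> (real n + 3) * fact (n+2)" by (intro mult_right_mono) auto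
  hence "3 * (2 * 3 ^ n) \<le> (real n + 3) * (fact (n+2) :: real)" using Suc by linarith
  thus ?case using e by (simp add: add.commute)
qed

lemma exp_bernstein_bound:
  fixes z l :: real
  assumes z: "\<bar>z\<bar> \<le> 1" and l: "0 \<le> l" "l < 3"
  shows "exp (l * z) \<le> 1 + l * z + z\<^sup>2 * (l\<^sup>2 / (2 * (1 - l / 3)))"
proof -
  define x where "x = l * z"
  have s1: "(\<lambda>n. x ^ (n + 2) / fact (n + 2)) sums (exp x - (1 + x))"
  proof -
    have "(\<lambda>n. x^n / fact n) sums exp x" using exp_converges[of x] by (simp add: divide_inverse_commute)
    hence "(\<lambda>n. x^(n+2) / fact (n+2)) sums (exp x - (\<Sum>i<2. x^i / fact i))"
      by (subst sums_iff_shift) simp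
    moreover have "(\<Sum>i<2. x^i / fact i) = 1 + x" by (simp add: eval_nat_numeral)
    ultimately show ?thesis by simp
  qed
  have g: "(\<lambda>n. (l/3)^n) sums (1 / (1 - l/3))"
    by (rule geometric_sums) (use l in auto)
  have s2: "(\<lambda>n. z\<^sup>2 * (l\<^sup>2 / 2) * (l/3)^n) sums (z\<^sup>2 * (l\<^sup>2 / 2) * (1 / (1 - l/3)))"
    by (rule sums_mult[OF g])
  have le: "x ^ (n + 2) / fact (n + 2) \<le> z\<^sup>2 * (l\<^sup>2 / 2) * (l/3)^n" for n
  proof -
    have "x ^ (n+2) \<le> \<bar>x\<bar> ^ (n+2)" by (metis abs_ge_self power_abs)
    also have "\<dots> = \<bar>z\<bar>^n * z\<^sup>2 * l^(n+2)" using l by (simp add: x_def abs_mult power_mult_distrib power_add power2_eq_square)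
    also have "\<dots> \<le> 1 * z\<^sup>2 * l^(n+2)"
      by (intro mult_right_mono power_le_one) (use z l in auto)
    finally have a: "x ^ (n+2) \<le> z\<^sup>2 * l^(n+2)" by simp
    have f: "2 * 3 ^ n \<le> (fact (n + 2) :: real)" by (rule fact_ge_aux)
    have "x ^ (n + 2) / fact (n + 2) \<le> z\<^sup>2 * l^(n+2) / fact (n+2)"
      by (intro divide_right_mono a) auto
    also have "\<dots> \<le> z\<^sup>2 * l^(n+2) / (2 * 3^n)"
      by (intro divide_left_mono f) (use l in auto)
    also have "\<dots> = z\<^sup>2 * (l\<^sup>2 / 2) * (l/3)^n"
      by (simp add: power_add power_divide power2_eq_square)
    finally show ?thesis .
  qed
  have "exp x - (1 + x) \<le> z\<^sup>2 * (l\<^sup>2 / 2) * (1 / (1 - l/3))"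
    by (rule sums_le[OF _ s1 s2]) (use le in auto)
  thus ?thesis by (simp add: x_def field_simps)
qed

lemma pmf_integrable_bounded:
  fixes f :: "'b \<Rightarrow> real"
  assumes "\<And>x. \<bar>f x\<bar> \<le> C"
  shows "integrable (measure_pmf M) f"
  by (rule measure_pmf.integrable_const_bound[where B=C]) (use assms in auto)

lemma mgf_indicator:
  fixes M :: "'b pmf" and A :: "'b set" and l :: real
  defines "q \<equiv> measure_pmf.prob M A"
  shows "measure_pmf.expectation M (\<lambda>x. exp (l * (indicator A x - q)))
        = q * exp (l * (1 - q)) + (1 - q) * exp (- l * q)"
proof -
  have eq: "(\<lambda>x. exp (l * (indicator A x - q))) =
      (\<lambda>x. (exp (l * (1 - q)) - exp (- l * q)) * indicator A x + exp (- l * q))"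
    by (auto simp: fun_eq_iff indicator_def)
  have ii: "integrable (measure_pmf M) (indicator A :: 'b \<Rightarrow> real)"
    by (rule pmf_integrable_bounded[where C=1]) (auto simp: indicator_def)
  have "measure_pmf.expectation M (\<lambda>x. (exp (l * (1 - q)) - exp (- l * q)) * indicator A x + exp (- l * q))
      = (exp (l * (1 - q)) - exp (- l * q)) * measure_pmf.expectation M (indicator A) + exp (- l * q)"
    using ii by (simp add: Bochner_Integration.integral_add integral_mult_right)
  also have "measure_pmf.expectation M (indicator A) = q"
    by (simp add: q_def)
  finally show ?thesis unfolding eq by (simp add: algebra_simps)
qed

lemma mgf_indicator_bound:
  fixes M :: "'b pmf" and A :: "'b set" and l :: real
  defines "q \<equiv> measure_pmf.prob M A"
  assumes l: "0 \<le> l" "l < 3"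
  shows "measure_pmf.expectation M (\<lambda>x. exp (l * (indicator A x - q)))
        \<le> exp (q * (1 - q) * (l\<^sup>2 / (2 * (1 - l / 3))))"
proof -
  define k where "k = l\<^sup>2 / (2 * (1 - l / 3))"
  have q01: "0 \<le> q" "q \<le> 1" by (auto simp: q_def)
  have e1: "exp (l * (1 - q)) \<le> 1 + l * (1 - q) + (1 - q)\<^sup>2 * k"
    unfolding k_def by (rule exp_bernstein_bound) (use q01 l in auto)
  have e2: "exp (l * (- q)) \<le> 1 + l * (- q) + (- q)\<^sup>2 * k"
    unfolding k_def by (rule exp_bernstein_bound) (use q01 l in auto)
  have "measure_pmf.expectation M (\<lambda>x. exp (l * (indicator A x - q)))
        = q * exp (l * (1 - q)) + (1 - q) * exp (l * (- q))"
    unfolding q_def by (subst mgf_indicator) simp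
  also have "\<dots> \<le> q * (1 + l * (1 - q) + (1 - q)\<^sup>2 * k) + (1 - q) * (1 + l * (- q) + (- q)\<^sup>2 * k)"
    by (intro add_mono mult_left_mono e1 e2) (use q01 in auto)
  also have "\<dots> = 1 + q * (1 - q) * k" by (simp add: algebra_simps power2_eq_square)
  also have "\<dots> \<le> exp (q * (1 - q) * k)" using exp_ge_add_one_self[of "q * (1 - q) * k"] by simp
  finally show ?thesis unfolding k_def .
qed

lemma mgf_indicator_degenerate:
  fixes M :: "'b pmf" and A :: "'b set" and l :: real
  defines "q \<equiv> measure_pmf.prob M A"
  assumes "q * (1 - q) = 0"
  shows "measure_pmf.expectation M (\<lambda>x. exp (l * (indicator A x - q))) = 1"
proof -
  have "q = 0 \<or> q = 1" using assms(2) by auto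
  thus ?thesis unfolding q_def by (subst mgf_indicator) auto
qed

lemma chernoff_Pi:
  fixes M :: "'b pmf" and A :: "'b set" and l s :: real and T :: nat
  defines "q \<equiv> measure_pmf.prob M A"
  assumes l: "0 \<le> l"
  shows "measure_pmf.prob (Pi_pmf {..<T} d (\<lambda>_. M))
           {Rs. (\<Sum>j<T. indicator A (Rs j)) - real T * q \<ge> s}
         \<le> exp (- l * s) * (measure_pmf.expectation M (\<lambda>x. exp (l * (indicator A x - q)))) ^ T"
proof -
  let ?P = "Pi_pmf {..<T} d (\<lambda>_. M)"
  let ?X = "{Rs. (\<Sum>j<T. indicator A (Rs j)) - real T * q \<ge> s}"
  define f where "f = (\<lambda>(j::nat) x. exp (l * (indicator A x - q)))"
  have intf: "integrable (measure_pmf M) (f j)" for j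
    proof -
    have q01: "0 \<le> q" "q \<le> 1" by (auto simp: q_def)
    have lq: "0 \<le> l * q" using l q01 by simp
    have "l * (1 - q) \<le> l" using l q01 by (simp add: mult_left_le)
    moreover have "- (l * q) \<le> l" using lq l by linarith
    ultimately show ?thesis
      unfolding f_def by (intro pmf_integrable_bounded[where C="exp l"]) (auto simp: indicator_def)
  qed
  have pt: "indicator ?X Rs \<le> exp (- l * s) * (\<Prod>j<T. f j (Rs j))" for Rs
  proof -
    have "(\<Prod>j<T. f j (Rs j)) = exp (\<Sum>j<T. l * (indicator A (Rs j) - q))"
      by (simp add: f_def exp_sum)
    also have "(\<Sum>j<T. l * (indicator A (Rs j) - q)) = l * ((\<Sum>j<T. indicator A (Rs j)) - real T * q)"
      by (simp add: sum_distrib_left sum_subtractf right_diff_distrib)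
    finally have e: "exp (- l * s) * (\<Prod>j<T. f j (Rs j)) = exp (l * ((\<Sum>j<T. indicator A (Rs j)) - real T * q - s))"
      by (simp add: exp_add[symmetric] algebra_simps)
    show ?thesis
    proof (cases "Rs \<in> ?X")
      case True
      hence "0 \<le> l * ((\<Sum>j<T. indicator A (Rs j)) - real T * q - s)" using l by auto
      hence "1 \<le> exp (l * ((\<Sum>j<T. indicator A (Rs j)) - real T * q - s))" by simp
      thus ?thesis using True e by simp
    next
      case False thus ?thesis using e by simp
    qed
  qed
  have int2: "integrable (measure_pmf ?P) (\<lambda>Rs. \<Prod>j\<in>{..<T}. f j (Rs j))"
    by (rule integrable_prod_Pi_pmf) (auto intro: intf)
  have "measure_pmf.prob ?P ?X = measure_pmf.expectation ?P (indicator ?X)" by simp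
  also have "\<dots> \<le> measure_pmf.expectation ?P (\<lambda>Rs. exp (- l * s) * (\<Prod>j<T. f j (Rs j)))"
    by (intro integral_mono pt int2[THEN integrable_mult_right]
        pmf_integrable_bounded[where C=1]) (auto simp: indicator_def)
  also have "\<dots> = exp (- l * s) * measure_pmf.expectation ?P (\<lambda>Rs. \<Prod>j\<in>{..<T}. f j (Rs j))"
    by simp
  also have "measure_pmf.expectation ?P (\<lambda>Rs. \<Prod>j\<in>{..<T}. f j (Rs j)) = (\<Prod>j\<in>{..<T}. measure_pmf.expectation M (f j))"
    by (rule expectation_prod_Pi_pmf) (use intf in \<open>auto simp: f_def\<close>)
  also have "\<dots> = (measure_pmf.expectation M (\<lambda>x. exp (l * (indicator A x - q)))) ^ T"
    by (simp add: f_def)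
  finally show ?thesis by simp
qed

lemma tail_bound:
  fixes M :: "'b pmf" and A :: "'b set" and s c :: real and T :: nat
  defines "q \<equiv> measure_pmf.prob M A"
  assumes T: "0 < T" and s: "0 < s" and c: "0 \<le> c"
    and key: "s\<^sup>2 \<ge> 2 * c * (real T * (q * (1 - q)) + s / 3)"
  shows "measure_pmf.prob (Pi_pmf {..<T} d (\<lambda>_. M))
           {Rs. (\<Sum>j<T. indicator A (Rs j)) - real T * q \<ge> s} \<le> exp (- c)"
proof -
  let ?mgf = "\<lambda>l. measure_pmf.expectation M (\<lambda>x. exp (l * (indicator A x - q)))"
  let ?pr = "measure_pmf.prob (Pi_pmf {..<T} d (\<lambda>_. M))
           {Rs. (\<Sum>j<T. indicator A (Rs j)) - real T * q \<ge> s}"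
  have q01: "0 \<le> q" "q \<le> 1" by (auto simp: q_def)
  have vnn: "0 \<le> q * (1 - q)" using q01 by simp
  show ?thesis
  proof (cases "q * (1 - q) = 0")
    case True
    define l where "l = c / s"
    have l: "0 \<le> l" using c s by (simp add: l_def)
    have "?pr \<le> exp (- l * s) * (?mgf l) ^ T"
      unfolding q_def by (rule chernoff_Pi[OF l])
    also have "?mgf l = 1" unfolding q_def by (rule mgf_indicator_degenerate) (use True in \<open>simp add: q_def\<close>)
    also have "- l * s = - c" using s by (simp add: l_def)
    finally show ?thesis by simp
  next
    case False
    define v where "v = real T * (q * (1 - q))"
    have v: "0 \<le> v" using vnn by (simp add: v_def)
    define l where "l = s / (v + s / 3)"
    have den: "0 < v + s / 3" using v s by simp
    have l0: "0 \<le> l" using s den by (simp add: l_def)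
    have l3: "l < 3"
    proof -
      have "v > 0 \<or> T = 0"
      proof (cases "T = 0")
        case False
        hence "0 < q * (1 - q)" using \<open>q * (1 - q) \<noteq> 0\<close> vnn by linarith
        thus ?thesis using False by (simp add: v_def)
      qed simp
      show ?thesis
      proof -
        have "v > 0" using T using \<open>v > 0 \<or> T = 0\<close> by simp
        hence "s < 3 * (v + s / 3)" by simp
        thus ?thesis using den by (simp add: l_def divide_less_eq)
      qed
    qed
    define k where "k = l\<^sup>2 / (2 * (1 - l / 3))"
    have "?pr \<le> exp (- l * s) * (?mgf l) ^ T"
      unfolding q_def by (rule chernoff_Pi[OF l0])
    also have "\<dots> \<le> exp (- l * s) * (exp (q * (1 - q) * k)) ^ T"
      unfolding k_def q_def
      by (intro mult_left_mono power_mono mgf_indicator_bound integral_nonneg) (use l0 l3 in auto)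
    also have "\<dots> = exp (- l * s + v * k)"
    proof -
      have "(exp (q * (1 - q) * k)) ^ T = exp (v * k)"
        by (simp add: v_def exp_of_nat_mult[symmetric] algebra_simps)
      thus ?thesis by (simp add: exp_add[symmetric])
    qed
    also have "- l * s + v * k = - s\<^sup>2 / (2 * (v + s / 3))"
    proof -
      have "0 < q * (1 - q)" using False vnn by linarith
      hence vp: "v > 0" using T by (simp add: v_def)
      have d: "1 - l / 3 = v / (v + s / 3)" using den by (simp add: l_def field_simps)
      have "v * k = v * l\<^sup>2 / (2 * (v / (v + s / 3)))" by (simp add: k_def d)
      also have "\<dots> = l\<^sup>2 * (v + s / 3) / 2" using vp den by (simp add: field_simps)
      also have "\<dots> = s\<^sup>2 / (2 * (v + s / 3))"
      proof -
        define w where "w = v + s / 3"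
        have "w > 0" using den by (simp add: w_def)
        thus ?thesis unfolding l_def w_def[symmetric] by (simp add: power2_eq_square field_simps)
      qed
      finally have vk: "v * k = s\<^sup>2 / (2 * (v + s / 3))" .
      have ls: "l * s = s\<^sup>2 / (v + s / 3)" by (simp add: l_def power2_eq_square)
      have "- l * s + v * k = - (l * s) + v * k" by simp
      also have "\<dots> = - (s\<^sup>2 / (v + s / 3)) + s\<^sup>2 / (2 * (v + s / 3))" by (simp only: vk ls)
      also have "\<dots> = - s\<^sup>2 / (2 * (v + s / 3))"
      proof -
        define w where "w = v + s / 3"
        have "w > 0" using den by (simp add: w_def)
        thus ?thesis unfolding w_def[symmetric] by (simp add: field_simps)
      qed
      finally show ?thesis .
    qed
    also have "exp (- s\<^sup>2 / (2 * (v + s / 3))) \<le> exp (- c)"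
    proof -
      have "2 * c * (v + s / 3) \<le> s\<^sup>2" using key by (simp add: v_def)
      hence "c \<le> s\<^sup>2 / (2 * (v + s / 3))" using den by (simp add: field_simps)
      thus ?thesis by simp
    qed
    finally show ?thesis .
  qed
qed

definition Hs :: "'a set \<Rightarrow> 'a set set" where "Hs S = {R. S \<inter> R \<noteq> {}}"

lemma prob_bind_pmf:
  "measure_pmf.prob (bind_pmf M N) X = measure_pmf.expectation M (\<lambda>x. measure_pmf.prob (N x) X)"
  unfolding measure_pmf_bind
  by (subst measure_pmf.measure_bind[where N="count_space UNIV"])
     (auto simp: space_subprob_algebra measure_pmf.subprob_space_axioms)

lemma prob_cond_pmf:
  assumes "set_pmf p \<inter> s \<noteq> {}"
  shows "measure_pmf.prob (cond_pmf p s) X = measure_pmf.prob p (s \<inter> X) / measure_pmf.prob p s"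
  using assms emeasure_measure_pmf_not_zero[OF assms]
  by (simp add: cond_pmf.rep_eq  measure_pmf.emeasure_eq_measure)

context
  fixes V :: "'a set" and E :: "('a \<times> 'a) set" and pe :: "'a \<times> 'a \<Rightarrow> real"
    and b :: "'a \<Rightarrow> real" and S :: "'a set"
  assumes finV: "finite V" and EV: "E \<subseteq> V \<times> V"
    and pe: "\<And>e. e \<in> E \<Longrightarrow> 0 < pe e \<and> pe e < 1"
    and bnn: "\<And>u. u \<in> V \<Longrightarrow> b u \<ge> 0"
    and Phipos: "Phi V E pe b > 0"
    and SV: "S \<subseteq> V"
begin

lemma finE: "finite E"
  using finite_subset[OF EV] finV by auto

lemma fin_in_nbrs: "finite (in_nbrs E u)"
proof -
  have "in_nbrs E u \<subseteq> fst ` E" by (force simp: in_nbrs_def)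
  thus ?thesis using finE finite_subset by blast
qed

lemma gam_bounds: "0 \<le> gam E pe u \<and> gam E pe u \<le> 1"
proof -
  have f: "\<And>v. v \<in> in_nbrs E u \<Longrightarrow> 0 \<le> 1 - pe (v, u) \<and> 1 - pe (v, u) \<le> 1"
    using pe by (force simp: in_nbrs_def)
  have "0 \<le> (\<Prod>v\<in>in_nbrs E u. 1 - pe (v, u))" by (rule prod_nonneg) (use f in auto)
  moreover have "(\<Prod>v\<in>in_nbrs E u. 1 - pe (v, u)) \<le> 1" by (rule prod_le_1) (use f in auto)
  ultimately show ?thesis by (simp add: gam_def)
qed

lemma reach_subset: "reach E g S \<subseteq> V"
proof
  fix t assume "t \<in> reach E g S"
  then obtain s where s: "s \<in> S" "(s, t) \<in> (live_edges E g)\<^sup>*" by (auto simp: reach_def)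
  from s(2) show "t \<in> V"
  proof (cases rule: rtranclE)
    case base thus ?thesis using s SV by auto
  next
    case (step y) thus ?thesis using EV by (auto simp: live_edges_def)
  qed
qed

definition Zs :: "'a \<Rightarrow> ('a \<times> 'a \<Rightarrow> bool) set" where
  "Zs u = {g. u \<in> reach E g S}"

definition As :: "'a \<Rightarrow> ('a \<times> 'a \<Rightarrow> bool) set" where
  "As u = {g. \<exists>v. (v, u) \<in> E \<and> g (v, u)}"

lemma benefit_sum: "benefit E pe b S = (\<Sum>u\<in>V. b u * measure_pmf.prob (live_pmf E pe) (Zs u))"
proof -
  have pt: "(\<Sum>u\<in>reach E g S. b u) = (\<Sum>u\<in>V. b u * indicator (Zs u) g)" for g
  proof -
    have "(\<Sum>u\<in>V. b u * indicator (Zs u) g) = (\<Sum>u\<in>reach E g S. b u * indicator (Zs u) g)"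
      by (rule sum.mono_neutral_right[OF finV reach_subset]) (auto simp: Zs_def)
    also have "\<dots> = (\<Sum>u\<in>reach E g S. b u)" by (intro sum.cong) (auto simp: Zs_def)
    finally show ?thesis by simp
  qed
  have "benefit E pe b S = measure_pmf.expectation (live_pmf E pe) (\<lambda>g. \<Sum>u\<in>V. b u * indicator (Zs u) g)"
    unfolding benefit_def pt ..
  also have "\<dots> = (\<Sum>u\<in>V. measure_pmf.expectation (live_pmf E pe) (\<lambda>g. b u * indicator (Zs u) g))"
  proof (rule Bochner_Integration.integral_sum)
    fix u show "integrable (measure_pmf (live_pmf E pe)) (\<lambda>g. b u * indicator (Zs u) g)"
      by (rule pmf_integrable_bounded[where C="\<bar>b u\<bar>"]) (auto simp: indicator_def)
  qed
  also have "\<dots> = (\<Sum>u\<in>V. b u * measure_pmf.prob (live_pmf E pe) (Zs u))"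
    by simp
  finally show ?thesis .
qed

lemma prob_As: "measure_pmf.prob (live_pmf E pe) (As u) = gam E pe u"
proof -
  define B where "B = (\<lambda>e::'a\<times>'a. if snd e = u then {False} else UNIV)"
  have c: "- As u = Pi E B" by (auto simp: As_def B_def Pi_def)
  have "measure_pmf.prob (live_pmf E pe) (Pi E B) = (\<Prod>e\<in>E. measure_pmf.prob (bernoulli_pmf (pe e)) (B e))"
    unfolding live_pmf_def by (rule measure_Pi_pmf_Pi[OF finE])
  also have "\<dots> = (\<Prod>e\<in>E. if snd e = u then 1 - pe e else 1)"
    by (intro prod.cong refl) (use pe in \<open>auto simp: B_def measure_pmf_single less_imp_le\<close>)
  also have "\<dots> = (\<Prod>e\<in>{e\<in>E. snd e = u}. 1 - pe e)"
    by (rule prod.inter_filter[OF finE, symmetric])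
  also have "\<dots> = (\<Prod>v\<in>in_nbrs E u. 1 - pe (v, u))"
  proof (rule prod.reindex_cong[where l="\<lambda>v. (v, u)"])
    show "inj_on (\<lambda>v. (v, u)) (in_nbrs E u)" by (auto simp: inj_on_def)
    show "{e \<in> E. snd e = u} = (\<lambda>v. (v, u)) ` in_nbrs E u" by (force simp: in_nbrs_def)
  qed simp
  finally have "measure_pmf.prob (live_pmf E pe) (- As u) = 1 - gam E pe u"
    by (simp add: c gam_def)
  moreover have "measure_pmf.prob (live_pmf E pe) (- As u) = 1 - measure_pmf.prob (live_pmf E pe) (As u)"
    by (simp add: measure_pmf.prob_compl[symmetric] Compl_eq_Diff_UNIV)
  ultimately show ?thesis by simp
qed


definition IBSu :: "'a \<Rightarrow> 'a set pmf" where
  "IBSu u = map_pmf (\<lambda>g. {v. (v, u) \<in> (live_edges E g)\<^sup>*})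
         (cond_pmf (live_pmf E pe) {g. \<exists>v. (v, u) \<in> E \<and> g (v, u)})"



lemma IBSu_prob: "measure_pmf.prob (IBSu u) (Hs S) = measure_pmf.prob (cond_pmf (live_pmf E pe) (As u)) (Zs u)"
proof -
  have "(\<lambda>g. {v. (v, u) \<in> (live_edges E g)\<^sup>*}) -` Hs S = Zs u"
    by (auto simp: Hs_def Zs_def reach_def)
  thus ?thesis by (simp add: IBSu_def As_def)
qed

lemma decomp:
  assumes u: "u \<in> V"
  shows "b u * measure_pmf.prob (live_pmf E pe) (Zs u)
       = gam E pe u * b u * measure_pmf.prob (IBSu u) (Hs S) + (if u \<in> S then (1 - gam E pe u) * b u else 0)"
proof (cases "u \<in> S")
  case True
  have "Zs u = UNIV" using True by (auto simp: Zs_def reach_def)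
  moreover have "(\<lambda>g. {v. (v, u) \<in> (live_edges E g)\<^sup>*}) -` Hs S = UNIV"
    using True by (auto simp: Hs_def)
  ultimately show ?thesis using True by (simp add: IBSu_def algebra_simps)
next
  case False
  have sub: "Zs u \<subseteq> As u"
  proof
    fix g assume "g \<in> Zs u"
    then obtain s where s: "s \<in> S" "(s, u) \<in> (live_edges E g)\<^sup>*" by (auto simp: Zs_def reach_def)
    from s(2) show "g \<in> As u"
    proof (cases rule: rtranclE)
      case base thus ?thesis using s False by auto
    next
      case (step y) thus ?thesis by (auto simp: live_edges_def As_def)
    qed
  qed
  have pA: "measure_pmf.prob (live_pmf E pe) (As u) = gam E pe u"
    by (rule prob_As)
  show ?thesis
  proof (cases "gam E pe u = 0")
    case True
    have "measure_pmf.prob (live_pmf E pe) (Zs u) \<le> measure_pmf.prob (live_pmf E pe) (As u)"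
      by (rule measure_pmf.finite_measure_mono[OF sub]) simp
    hence "measure_pmf.prob (live_pmf E pe) (Zs u) = 0" using True pA by (simp add: measure_le_0_iff)
    thus ?thesis using True False by simp
  next
    case g0: False
    have ne: "set_pmf (live_pmf E pe) \<inter> As u \<noteq> {}"
      using g0 pA measure_pmf_zero_iff by metis
    have "measure_pmf.prob (IBSu u) (Hs S) = measure_pmf.prob (live_pmf E pe) (As u \<inter> Zs u) / gam E pe u"
      unfolding IBSu_prob using prob_cond_pmf[OF ne] pA by simp
    also have "As u \<inter> Zs u = Zs u" using sub by blast
    finally show ?thesis using g0 False by (simp add: field_simps)
  qed
qed

lemma source_pmf_pmf: "pmf (source_pmf V E pe b) u = (if u \<in> V then gam E pe u * b u / Phi V E pe b else 0)"
  unfolding source_pmf_def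
proof (rule pmf_embed_pmf)
  show "0 \<le> (if x \<in> V then gam E pe x * b x / Phi V E pe b else 0)" for x
    using gam_bounds bnn Phipos by auto
  have "(\<integral>\<^sup>+ x. ennreal (if x \<in> V then gam E pe x * b x / Phi V E pe b else 0) \<partial>count_space UNIV)
      = (\<Sum>x\<in>V. ennreal (if x \<in> V then gam E pe x * b x / Phi V E pe b else 0))"
    by (rule nn_integral_count_space'[OF finV]) auto
  also have "\<dots> = ennreal (\<Sum>x\<in>V. gam E pe x * b x / Phi V E pe b)"
    by (subst sum_ennreal) (use gam_bounds bnn Phipos in auto)
  also have "(\<Sum>x\<in>V. gam E pe x * b x / Phi V E pe b) = 1"
    using Phipos by (simp add: sum_divide_distrib[symmetric] Phi_def)
  finally show "(\<integral>\<^sup>+ x. ennreal (if x \<in> V then gam E pe x * b x / Phi V E pe b else 0) \<partial>count_space UNIV) = 1"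
    by simp
qed

lemma q_formula:
  "Phi V E pe b * measure_pmf.prob (IBS_pmf V E pe b) (Hs S) = (\<Sum>u\<in>V. gam E pe u * b u * measure_pmf.prob (IBSu u) (Hs S))"
proof -
  have "measure_pmf.prob (IBS_pmf V E pe b) (Hs S) = measure_pmf.expectation (source_pmf V E pe b) (\<lambda>u. measure_pmf.prob (IBSu u) (Hs S))"
    unfolding IBS_pmf_def IBSu_def by (rule prob_bind_pmf)
  also have "\<dots> = (\<Sum>u\<in>V. pmf (source_pmf V E pe b) u *\<^sub>R measure_pmf.prob (IBSu u) (Hs S))"
    by (rule integral_measure_pmf[OF finV]) (auto simp: set_pmf_eq source_pmf_pmf split: if_splits)
  also have "\<dots> = (\<Sum>u\<in>V. gam E pe u * b u / Phi V E pe b * measure_pmf.prob (IBSu u) (Hs S))"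
    by (intro sum.cong) (auto simp: source_pmf_pmf)
  finally show ?thesis using Phipos by (simp add: sum_distrib_left)
qed

lemma benefit_formula:
  "benefit E pe b S = Phi V E pe b * measure_pmf.prob (IBS_pmf V E pe b) (Hs S) + (\<Sum>v\<in>S. (1 - gam E pe v) * b v)"
proof -
  have "benefit E pe b S = (\<Sum>u\<in>V. b u * measure_pmf.prob (live_pmf E pe) (Zs u))"
    by (rule benefit_sum)
  also have "\<dots> = (\<Sum>u\<in>V. gam E pe u * b u * measure_pmf.prob (IBSu u) (Hs S))
         + (\<Sum>u\<in>V. if u \<in> S then (1 - gam E pe u) * b u else 0)"
    by (simp add: decomp sum.distrib)
  also have "(\<Sum>u\<in>V. if u \<in> S then (1 - gam E pe u) * b u else 0) = (\<Sum>v\<in>S. (1 - gam E pe v) * b v)"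
  proof -
    have "S \<inter> V = S" using SV by blast
    thus ?thesis by (simp add: sum.If_cases[OF finV] Int_commute)
  qed
  finally show ?thesis by (simp add: q_formula)
qed

end

lemma var_core:
  fixes a \<rho> q \<mu> :: real
  assumes a: "0 \<le> a" and r: "0 < \<rho>" and q: "0 \<le> q" "q \<le> 1" and mu: "\<mu> = \<rho> * q + a"
  shows "\<rho>\<^sup>2 * (q * (1 - q)) \<le> min \<rho> ((\<rho> + a) + a - 2 * sqrt (a * (\<rho> + a))) * \<mu>"
proof -
  define bb where "bb = \<rho> + a"
  have eq: "\<rho>\<^sup>2 * (q * (1 - q)) = (\<mu> - a) * (bb - \<mu>)"
    by (simp add: mu bb_def power2_eq_square algebra_simps)
  have m0: "0 \<le> \<mu>" using mu a r q by simp
  have h1: "(\<mu> - a) * (bb - \<mu>) \<le> \<mu> * \<rho>"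
    by (intro mult_mono) (use a r q mu in \<open>auto simp: bb_def mult_left_le\<close>)
  define rt where "rt = sqrt (a * bb)"
  have rt2: "rt\<^sup>2 = a * bb" unfolding rt_def using a r by (simp add: bb_def)
  have h2: "(\<mu> - a) * (bb - \<mu>) \<le> (bb + a - 2 * rt) * \<mu>"
  proof -
    have "0 \<le> (\<mu> - rt)\<^sup>2" by simp
    thus ?thesis using rt2 by (simp add: power2_eq_square algebra_simps)
  qed
  have "(\<mu> - a) * (bb - \<mu>) \<le> min (\<rho> * \<mu>) ((bb + a - 2 * rt) * \<mu>)"
    using h1 h2 by (simp add: mult.commute)
  also have "min (\<rho> * \<mu>) ((bb + a - 2 * rt) * \<mu>) = min \<rho> (bb + a - 2 * rt) * \<mu>"
    using m0 by (simp add: min_mult_distrib_right)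
  finally show ?thesis using eq by (simp add: bb_def rt_def)
qed

lemma root_ge:
  fixes x a B :: real
  assumes "0 < x" "0 \<le> a" "0 \<le> B" "x\<^sup>2 - 2 * a * x - B > 0"
  shows "x \<ge> a + sqrt (a\<^sup>2 + B)"
proof (rule ccontr)
  define r where "r = sqrt (a\<^sup>2 + B)"
  have r2: "r\<^sup>2 = a\<^sup>2 + B" using assms by (simp add: r_def)
  have r0: "r \<ge> a" using assms by (simp add: r_def real_le_rsqrt)
  assume "\<not> x \<ge> a + sqrt (a\<^sup>2 + B)"
  hence "x - a < r" by (simp add: r_def)
  moreover have "x - a > - r" using r0 assms by linarith
  ultimately have "0 < (r - (x - a)) * (r + (x - a))" by (intro mult_pos_pos) auto
  hence "(x - a)\<^sup>2 < r\<^sup>2" by (simp add: power2_eq_square algebra_simps)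
  thus False using r2 assms(4) by (simp add: power2_eq_square algebra_simps)
qed

lemma alg_core:
  fixes T \<rho> c p \<mu> yh x :: real
  assumes T: "T > 0" and r: "\<rho> > 0" and c: "c > 0" and p: "p \<ge> 0" and mu: "\<mu> \<ge> 0" and yh0: "yh \<ge> 0"
    and yh: "yh = \<mu> + \<rho> * x / T"
    and ev: "T * (yh - \<mu>) > (\<rho> * c / 3 - c * p) + sqrt ((\<rho> * c / 3 - c * p)\<^sup>2 + 2 * T * p * c * yh)"
  shows "x \<ge> c / 3 + sqrt ((c / 3)\<^sup>2 + 2 * c * (T * p * \<mu> / \<rho>\<^sup>2))"
proof -
  define A where "A = \<rho> * c / 3 - c * p"
  define d where "d = yh - \<mu>"
  define y where "y = sqrt (A\<^sup>2 + 2 * T * p * c * yh)"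
  have B0: "0 \<le> 2 * T * p * c * yh" using T p c yh0 by simp
  have y2: "y\<^sup>2 = A\<^sup>2 + 2 * T * p * c * yh"
  proof -
    have "0 \<le> A\<^sup>2 + 2 * T * p * c * yh" using B0 by (simp add: add_nonneg_nonneg)
    thus ?thesis unfolding y_def by simp
  qed
  have "sqrt (A\<^sup>2) \<le> y" unfolding y_def by (rule real_sqrt_le_mono) (use B0 in simp)
  hence yA: "y \<ge> \<bar>A\<bar>" by simp
  have Td: "T * d > A + y" using ev by (simp add: A_def y_def d_def)
  have "T * d > 0" using Td yA by linarith
  hence d0: "d > 0" using T by (simp add: zero_less_mult_iff)
  have "T * d - A > y" using Td by simp
  moreover have "y \<ge> 0" using yA by linarith
  ultimately have "(T * d - A)\<^sup>2 > y\<^sup>2" by (intro power_strict_mono) auto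
  hence "T * (T * d\<^sup>2 - 2 * d * A - 2 * p * c * yh) > 0"
    using y2 by (simp add: power2_eq_square algebra_simps)
  hence "T * d\<^sup>2 - 2 * d * A - 2 * p * c * yh > 0" using T by (simp add: zero_less_mult_iff)
  moreover have "yh = \<mu> + d" by (simp add: d_def)
  ultimately have s1: "T * d\<^sup>2 - 2 * d * \<rho> * c / 3 - 2 * p * c * \<mu> > 0"
    by (simp add: A_def algebra_simps)
  have dx: "d = \<rho> * x / T" using yh by (simp add: d_def)
  have x0: "x > 0" using d0 dx T r by (simp add: zero_less_mult_iff zero_less_divide_iff)
  have xd: "x = T * d / \<rho>" using dx r T by simp
  have "x\<^sup>2 - 2 * (c / 3) * x - 2 * c * (T * p * \<mu> / \<rho>\<^sup>2)
      = T * (T * d\<^sup>2 - 2 * d * \<rho> * c / 3 - 2 * p * c * \<mu>) / \<rho>\<^sup>2"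
    using r by (simp add: xd power2_eq_square field_simps)
  also have "\<dots> > 0" using s1 T r by simp
  finally have s2: "x\<^sup>2 - 2 * (c / 3) * x - 2 * c * (T * p * \<mu> / \<rho>\<^sup>2) > 0" .
  show ?thesis by (rule root_ge[OF x0 _ _ s2]) (use c T p mu r in auto)
qed

theorem lemma6:
  fixes V :: "'a set" and E :: "('a \<times> 'a) set" and pe :: "'a \<times> 'a \<Rightarrow> real"
    and b :: "'a \<Rightarrow> real" and S :: "'a set" and T :: nat and \<delta> :: real
  assumes "finite V" and "E \<subseteq> V \<times> V"
    and "\<And>e. e \<in> E \<Longrightarrow> 0 < pe e \<and> pe e < 1"
    and "\<And>u. u \<in> V \<Longrightarrow> b u \<ge> 0"
    and "Gamma_tot V b > 0" and "Phi V E pe b > 0"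
    and "S \<subseteq> V" and "T > 0"
    and "0 < \<delta>" and "\<delta> < 1"
  shows "measure_pmf.prob (IBS_sample_pmf V E pe b T)
           {Rs. benefit E pe b S \<ge> f_l V E pe b T S \<delta> Rs} \<ge> 1 - \<delta>"
proof -
  note ctx = assms(1,2,3,4,6,7)
  define M where "M = IBS_pmf V E pe b"
  define q where "q = measure_pmf.prob M (Hs S)"
  define \<Gamma> where "\<Gamma> = Gamma_tot V b"
  define \<Phi> where "\<Phi> = Phi V E pe b"
  define \<rho> where "\<rho> = \<Phi> / \<Gamma>"
  define m where "m = (\<Sum>v\<in>S. (1 - gam E pe v) * b v)"
  define a where "a = m / \<Gamma>"
  define B where "B = benefit E pe b S"
  define p where "p = pS V E pe b S"
  define c where "c = ln (1 / \<delta>)"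
  define K where "K = (\<lambda>Rs. \<Sum>j<T. indicator (Hs S) (Rs j) :: real)"
  have G0: "\<Gamma> > 0" and P0: "\<Phi> > 0" using assms by (auto simp: \<Gamma>_def \<Phi>_def)
  have r0: "\<rho> > 0" using G0 P0 by (simp add: \<rho>_def)
  have q01: "0 \<le> q" "q \<le> 1" by (auto simp: q_def)
  have m0: "0 \<le> m" unfolding m_def
    by (intro sum_nonneg mult_nonneg_nonneg) (use gam_bounds[OF ctx] assms(4,7) in auto)
  have a0: "0 \<le> a" using m0 G0 by (simp add: a_def)
  have Bf: "B = \<Phi> * q + m" unfolding B_def \<Phi>_def q_def m_def M_def by (rule benefit_formula[OF ctx])
  define \<mu> where "\<mu> = B / \<Gamma>"
  have mu: "\<mu> = \<rho> * q + a" using G0 by (simp add: \<mu>_def Bf \<rho>_def a_def add_divide_distrib)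
  have mu0: "\<mu> \<ge> 0" using mu r0 q01 a0 by simp
  have pdef: "p = min \<rho> ((\<rho> + a) + a - 2 * sqrt (a * (\<rho> + a)))"
    by (simp add: p_def pS_def mu_max_def mu_min_def rho_def \<rho>_def a_def m_def \<Gamma>_def \<Phi>_def mult.commute)
  have p0: "p \<ge> 0"
  proof -
    have "sqrt (a * (\<rho> + a)) = sqrt a * sqrt (\<rho> + a)" by (simp add: real_sqrt_mult)
    hence "(\<rho> + a) + a - 2 * sqrt (a * (\<rho> + a)) = (sqrt (\<rho> + a) - sqrt a)\<^sup>2"
      using a0 r0 by (simp add: power2_eq_square algebra_simps)
    thus ?thesis using r0 by (simp add: pdef)
  qed
  have var: "\<rho>\<^sup>2 * (q * (1 - q)) \<le> p * \<mu>" unfolding pdef by (rule var_core[OF a0 r0 q01 mu])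
  have d0: "0 < c" using assms(9,10) by (simp add: c_def)
  have expc: "exp (- c) = \<delta>" using assms(9) by (simp add: c_def ln_div)
  define v' where "v' = real T * p * \<mu> / \<rho>\<^sup>2"
  have v'0: "v' \<ge> 0" using p0 mu0 by (simp add: v'_def)
  define s where "s = c / 3 + sqrt ((c / 3)\<^sup>2 + 2 * c * v')"
  have s0: "s > 0" using d0 v'0 by (simp add: s_def add_pos_nonneg)
  have s2: "s\<^sup>2 = 2 * c * (v' + s / 3)"
  proof -
    have "(s - c / 3)\<^sup>2 = (c / 3)\<^sup>2 + 2 * c * v'" using d0 v'0 by (simp add: s_def)
    thus ?thesis by (simp add: power2_eq_square algebra_simps)
  qed
  have Tq: "real T * (q * (1 - q)) \<le> v'"
  proof -
    have "q * (1 - q) \<le> p * \<mu> / \<rho>\<^sup>2" using var r0 by (simp add: field_simps)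
    hence "real T * (q * (1 - q)) \<le> real T * (p * \<mu> / \<rho>\<^sup>2)" by (intro mult_left_mono) auto
    thus ?thesis by (simp add: v'_def)
  qed
  have key: "s\<^sup>2 \<ge> 2 * c * (real T * (q * (1 - q)) + s / 3)"
    unfolding s2 using Tq d0 by (intro mult_left_mono) auto
  have tail: "measure_pmf.prob (Pi_pmf {..<T} {} (\<lambda>_. M)) {Rs. K Rs - real T * q \<ge> s} \<le> \<delta>"
    using tail_bound[OF assms(8) s0 less_imp_le[OF d0], of M "Hs S"] key expc
    by (simp add: K_def q_def)
  have finS: "finite S" using assms(1,7) finite_subset by blast
  have est_eq: "est V E pe b T Rs S = \<Phi> / real T * K Rs + m" for Rs
  proof -
    have "min 1 (real (card (S \<inter> Rs j))) = indicator (Hs S) (Rs j)" for j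
    proof (cases "S \<inter> Rs j = {}")
      case True thus ?thesis by (simp add: Hs_def indicator_def)
    next
      case False
      hence "card (S \<inter> Rs j) \<ge> 1" using finS by (simp add: Suc_le_eq card_gt_0_iff)
      thus ?thesis using False by (simp add: Hs_def indicator_def)
    qed
    thus ?thesis by (simp add: est_def K_def \<Phi>_def m_def)
  qed
  have incl: "{Rs. \<not> B \<ge> f_l V E pe b T S \<delta> Rs} \<subseteq> {Rs. K Rs - real T * q \<ge> s}"
  proof safe
    fix Rs assume nB: "\<not> B \<ge> f_l V E pe b T S \<delta> Rs"
    define Bh where "Bh = est V E pe b T Rs S"
    define A where "A = \<rho> * c / 3 - c * p"
    define Y where "Y = sqrt (A\<^sup>2 + 2 * real T * p * c * Bh / \<Gamma>)"
    have "f_l V E pe b T S \<delta> Rs \<le> Bh - \<Gamma> / real T * (A + Y)"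
      by (simp add: f_l_def Let_def Bh_def A_def Y_def c_def p_def \<rho>_def \<Gamma>_def \<Phi>_def rho_def)
    hence lt: "B < Bh - \<Gamma> / real T * (A + Y)" using nB by simp
    define yh where "yh = Bh / \<Gamma>"
    have K0: "K Rs \<ge> 0" by (simp add: K_def sum_nonneg)
    have yh0: "yh \<ge> 0" using K0 m0 P0 G0 by (simp add: yh_def Bh_def est_eq)
    have yh: "yh = \<mu> + \<rho> * (K Rs - real T * q) / real T"
      using G0 assms(8) by (simp add: yh_def Bh_def est_eq mu \<rho>_def a_def field_simps)
    have ev: "real T * (yh - \<mu>) > A + sqrt (A\<^sup>2 + 2 * real T * p * c * yh)"
    proof -
      have "\<Gamma> / real T * (A + Y) < Bh - B" using lt by simp
      hence "(A + Y) < (Bh - B) * real T / \<Gamma>" using G0 assms(8) by (simp add: field_simps)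
      also have "(Bh - B) * real T / \<Gamma> = real T * (yh - \<mu>)" by (simp add: yh_def \<mu>_def diff_divide_distrib[symmetric])
      finally show ?thesis by (simp add: Y_def yh_def)
    qed
    have "K Rs - real T * q \<ge> c / 3 + sqrt ((c / 3)\<^sup>2 + 2 * c * (real T * p * \<mu> / \<rho>\<^sup>2))"
      by (rule alg_core[OF _ r0 d0 p0 mu0 yh0 yh]) (use assms(8) ev in \<open>auto simp: A_def\<close>)
    thus "s \<le> K Rs - real T * q" by (simp add: s_def v'_def)
  qed
  let ?P = "measure_pmf (IBS_sample_pmf V E pe b T)"
  have "measure ?P {Rs. \<not> B \<ge> f_l V E pe b T S \<delta> Rs} \<le> \<delta>"
    using measure_pmf.finite_measure_mono[OF incl, of "IBS_sample_pmf V E pe b T"] tail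
    unfolding IBS_sample_pmf_def M_def by (simp add: order_trans)
  moreover have "measure ?P {Rs. \<not> B \<ge> f_l V E pe b T S \<delta> Rs} = 1 - measure ?P {Rs. B \<ge> f_l V E pe b T S \<delta> Rs}"
    using measure_pmf.prob_compl[of "{Rs. B \<ge> f_l V E pe b T S \<delta> Rs}" "IBS_sample_pmf V E pe b T"]
    by (simp add: Compl_eq_Diff_UNIV[symmetric] Collect_neg_eq)
  ultimately show ?thesis by (simp add: B_def)
qed

end
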